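(* Let $\varepsilon>0$, $\beta\in(0,1)$ and let $G$ be a graph with at least one edge. Run the following randomized procedure: set $T=-\frac{4}{\varepsilon}\ln\frac{2}{\beta}$ and $\tilde T=T+\mathrm{Lap}(2/\varepsilon)$; for $\tau=1,2,3,\dots$ compute $\tilde Q_\tau=Q_{\mathrm{Del\text{-}Deg}}(G,\tau)+\mathrm{Lap}(2/\varepsilon)$ (fresh independent noise each time) and output the first $\tau$ with $\tilde Q_\tau>\tilde T$. Then with probability at least $1-\beta$, the output $\tau$ satisfies $\tau\le\deg(G)$ and $$|Q_{\mathrm{Del\text{-}Deg}}(G,\tau)|\le\frac{4}{\varepsilon}\ln\deg(G)+\frac{8}{\varepsilon}\ln\frac{2}{\beta}.$$
   Context: Graphs are finite, simple, undirected; $\deg_G(v)$ is the degree of $v$ and $\deg(G)$ the maximum degree. $Q_{\mathrm{Del\text{-}Deg}}(G,\tau)=-\tfrac12\sum_{v:\deg_G(v)\ge\tau}(\deg_G(v)-\tau)$. $\mathrm{Lap}(b)$ denotes a random variable with density $\frac{1}{2b}e^{-|x|/b}$; all Laplace draws are independent. *)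

theory Defs
  imports "HOL-Probability.Probability"
begin

definition simple_graph :: "'a set \<Rightarrow> ('a \<Rightarrow> 'a \<Rightarrow> bool) \<Rightarrow> bool" where
  "simple_graph V E \<longleftrightarrow> finite V \<and> (\<forall>u v. E u v \<longrightarrow> u \<in> V \<and> v \<in> V)
      \<and> (\<forall>u v. E u v \<longrightarrow> E v u) \<and> (\<forall>v. \<not> E v v)"

definition gdeg :: "'a set \<Rightarrow> ('a \<Rightarrow> 'a \<Rightarrow> bool) \<Rightarrow> 'a \<Rightarrow> nat" where
  "gdeg V E v = card {u \<in> V. E v u}"

definition max_deg :: "'a set \<Rightarrow> ('a \<Rightarrow> 'a \<Rightarrow> bool) \<Rightarrow> nat" where
  "max_deg V E = Max (gdeg V E ` V)"

definition Q_del_deg :: "'a set \<Rightarrow> ('a \<Rightarrow> 'a \<Rightarrow> bool) \<Rightarrow> nat \<Rightarrow> real" where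
  "Q_del_deg V E \<tau> = - (1/2) * (\<Sum>v\<in>{v \<in> V. gdeg V E v \<ge> \<tau>}. (real (gdeg V E v) - real \<tau>))"

definition laplace_density :: "real \<Rightarrow> real \<Rightarrow> real" where
  "laplace_density b x = exp (- \<bar>x\<bar> / b) / (2 * b)"

definition laplace :: "real \<Rightarrow> real measure" where
  "laplace b = density lborel (\<lambda>x. ennreal (laplace_density b x))"

text \<open>Noise space: \<omega> 0 is the threshold noise, \<omega> \<tau> (\<tau> \<ge> 1) the noise of query \<tau>;
  all i.i.d. Lap(b).\<close>
definition noise_space :: "real \<Rightarrow> (nat \<Rightarrow> real) measure" where
  "noise_space b = (\<Pi>\<^sub>M i\<in>(UNIV :: nat set). laplace b)"

definition sv_output :: "(nat \<Rightarrow> real) \<Rightarrow> real \<Rightarrow> (nat \<Rightarrow> real) \<Rightarrow> nat option" where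
  "sv_output q T \<omega> =
     (if \<exists>\<tau>\<ge>1. q \<tau> + \<omega> \<tau> > T + \<omega> 0
      then Some (LEAST \<tau>. \<tau> \<ge> 1 \<and> q \<tau> + \<omega> \<tau> > T + \<omega> 0) else None)"

end

theory Submission imports Defs begin

lemma laplace_density_borel[measurable]: "laplace_density b \<in> borel_measurable borel"
  unfolding laplace_density_def by measurable

lemma sets_laplace[simp, measurable_cong]: "sets (laplace b) = sets borel"
  by (simp add: laplace_def)

lemma space_laplace[simp]: "space (laplace b) = UNIV"
  by (simp add: laplace_def)

lemma laplace_upper:
  assumes b: "b > 0" and t: "t \<ge> 0"
  shows "emeasure (laplace b) {t..} = ennreal (exp (- t / b) / 2)"
proof -
  have "emeasure (laplace b) {t..} = (\<integral>\<^sup>+x. ennreal (laplace_density b x) * indicator {t..} x \<partial>lborel)"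
    unfolding laplace_def by (subst emeasure_density) auto
  also have "\<dots> = (\<integral>\<^sup>+x. ennreal (exp (- x / b) / (2 * b)) * indicator {t..} x \<partial>lborel)"
    using t by (intro nn_integral_cong) (auto simp: laplace_density_def indicator_def)
  also have "\<dots> = ennreal (0 - (- exp (- t / b) / 2))"
  proof (rule nn_integral_FTC_atLeast)
    show "(\<lambda>x. exp (- x / b) / (2 * b)) \<in> borel_measurable borel" by measurable
    show "((\<lambda>x. - exp (- x / b) / 2) has_real_derivative exp (- x / b) / (2 * b)) (at x)" for x
      using b by (auto intro!: derivative_eq_intros simp: field_simps)
    show "0 \<le> exp (- x / b) / (2 * b)" for x using b by simp
    have "filterlim (\<lambda>x::real. inverse b * x) at_top at_top"
      using b by (intro filterlim_tendsto_pos_mult_at_top[OF tendsto_const] filterlim_ident) auto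
    then have "filterlim (\<lambda>x::real. - (inverse b * x)) at_bot at_top"
      by (simp add: filterlim_uminus_at_top)
    then have "filterlim (\<lambda>x::real. - x / b) at_bot at_top"
      by (simp add: divide_inverse mult.commute)
    then have "((\<lambda>x::real. exp (- x / b)) \<longlongrightarrow> 0) at_top"
      by (rule filterlim_compose[OF exp_at_bot])
    then have "((\<lambda>x::real. - exp (- x / b) / 2) \<longlongrightarrow> - 0 / 2) at_top"
      by (intro tendsto_divide tendsto_minus tendsto_const) auto
    then show "((\<lambda>x. - exp (- x / b) / 2) \<longlongrightarrow> 0) at_top" by simp
  qed
  finally show ?thesis by simp
qed

lemma laplace_lower:
  assumes b: "b > 0" and t: "t \<ge> 0"
  shows "emeasure (laplace b) {..-t} = ennreal (exp (- t / b) / 2)"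
proof -
  have "emeasure (laplace b) {..-t} = (\<integral>\<^sup>+x. ennreal (laplace_density b x) * indicator {..-t} x \<partial>lborel)"
    unfolding laplace_def by (subst emeasure_density) auto
  also have "\<dots> = (\<integral>\<^sup>+x. ennreal (laplace_density b x) * indicator {..-t} x \<partial>(distr lborel borel uminus))"
    by (simp add: lborel_distr_uminus)
  also have "\<dots> = (\<integral>\<^sup>+x. ennreal (laplace_density b (-x)) * indicator {..-t} (-x) \<partial>lborel)"
    by (subst nn_integral_distr) auto
  also have "\<dots> = (\<integral>\<^sup>+x. ennreal (laplace_density b x) * indicator {t..} x \<partial>lborel)"
    by (intro nn_integral_cong) (auto simp: laplace_density_def indicator_def)
  also have "\<dots> = emeasure (laplace b) {t..}"
    unfolding laplace_def by (subst emeasure_density) auto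
  finally show ?thesis using laplace_upper[OF b t] by simp
qed

lemma prob_space_laplace:
  assumes b: "b > 0"
  shows "prob_space (laplace b)"
proof
  have s0: "emeasure (laplace b) {0} = 0"
  proof -
    have "emeasure (laplace b) {0} = (\<integral>\<^sup>+x. ennreal (laplace_density b x) * indicator {0} x \<partial>lborel)"
      unfolding laplace_def by (subst emeasure_density) auto
    also have "\<dots> = 0"
      using AE_lborel_singleton[of 0] by (subst nn_integral_0_iff_AE) (auto simp: indicator_def)
    finally show ?thesis by simp
  qed
  have "emeasure (laplace b) {..0} = emeasure (laplace b) ({..<0} \<union> {0})"
    by (intro arg_cong[where f="emeasure _"]) auto
  also have "\<dots> = emeasure (laplace b) {..<0} + emeasure (laplace b) {0}"
    by (rule plus_emeasure[symmetric]) auto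
  finally have l: "emeasure (laplace b) {..<0} = ennreal (1/2)"
    using laplace_lower[OF b, of 0] s0 by simp
  have "emeasure (laplace b) (space (laplace b)) = emeasure (laplace b) ({..<0} \<union> {0..})"
    by (intro arg_cong[where f="emeasure _"]) auto
  also have "\<dots> = emeasure (laplace b) {..<0} + emeasure (laplace b) {0..}"
    by (rule plus_emeasure[symmetric]) auto
  also have "\<dots> = ennreal (1/2) + ennreal (1/2)"
    using l laplace_upper[OF b, of 0] by simp
  also have "\<dots> = 1" by (subst ennreal_plus[symmetric]) auto
  finally show "emeasure (laplace b) (space (laplace b)) = 1" .
qed


lemma prob_space_noise:
  assumes b: "b > 0" shows "prob_space (noise_space b)"
  unfolding noise_space_def by (rule prob_space_PiM) (rule prob_space_laplace[OF b])

lemma coord_measurable[measurable]: "(\<lambda>\<omega>. \<omega> i) \<in> borel_measurable (noise_space b)"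
proof -
  have "(\<lambda>\<omega>. \<omega> i) \<in> measurable (noise_space b) (laplace b)"
    unfolding noise_space_def by (rule measurable_component_singleton) simp
  moreover have "measurable (noise_space b) (laplace b) = measurable (noise_space b) borel"
    by (rule measurable_cong_sets) auto
  ultimately show ?thesis by simp
qed

lemma coord_measure:
  assumes b: "b > 0" and A: "A \<in> sets borel"
  shows "measure (noise_space b) {\<omega> \<in> space (noise_space b). \<omega> i \<in> A} = measure (laplace b) A"
proof -
  interpret L: prob_space "laplace b" by (rule prob_space_laplace[OF b])
  interpret product_prob_space "\<lambda>_. laplace b" UNIV
    by unfold_locales
  have "emeasure (noise_space b) {\<omega> \<in> space (noise_space b). \<omega> i \<in> A} = emeasure (laplace b) A"
    unfolding noise_space_def using A by (intro emeasure_PiM_Collect_single) auto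
  then show ?thesis by (simp only: measure_def)
qed

lemma sv_output_Some:
  "sv_output q T \<omega> = Some \<tau> \<longleftrightarrow>
     (1 \<le> \<tau> \<and> q \<tau> + \<omega> \<tau> > T + \<omega> 0 \<and> (\<forall>\<sigma>. \<sigma> < \<tau> \<longrightarrow> 1 \<le> \<sigma> \<longrightarrow> \<not> q \<sigma> + \<omega> \<sigma> > T + \<omega> 0))"
  (is "?L \<longleftrightarrow> ?R")
proof
  assume ?L
  then have ex: "\<exists>\<tau>\<ge>1. q \<tau> + \<omega> \<tau> > T + \<omega> 0" and t: "\<tau> = (LEAST \<tau>. \<tau> \<ge> 1 \<and> q \<tau> + \<omega> \<tau> > T + \<omega> 0)"
    by (auto simp: sv_output_def split: if_splits)
  show ?R using LeastI_ex[OF ex] not_less_Least[where P="\<lambda>\<tau>. \<tau> \<ge> 1 \<and> q \<tau> + \<omega> \<tau> > T + \<omega> 0"]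
    unfolding t by blast
next
  assume R: ?R
  then have "(LEAST \<tau>. \<tau> \<ge> 1 \<and> q \<tau> + \<omega> \<tau> > T + \<omega> 0) = \<tau>"
    by (intro Least_equality) (auto simp: not_less[symmetric])
  then show ?L using R by (auto simp: sv_output_def)
qed


lemma laplace_upper_meas:
  assumes b: "b > 0" and t: "t \<ge> 0" and S: "S \<subseteq> {t..}" "S \<in> sets borel"
  shows "measure (laplace b) S \<le> exp (- t / b) / 2"
proof -
  have "measure (laplace b) S \<le> measure (laplace b) {t..}"
    using S by (intro finite_measure.finite_measure_mono[OF prob_space.axioms(1)[OF prob_space_laplace[OF b]]]) auto
  also have "\<dots> = exp (- t / b) / 2" using laplace_upper[OF b t] by (simp add: measure_def)
  finally show ?thesis .
qed

lemma laplace_lower_meas: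
  assumes b: "b > 0" and t: "t \<ge> 0" and S: "S \<subseteq> {..-t}" "S \<in> sets borel"
  shows "measure (laplace b) S \<le> exp (- t / b) / 2"
proof -
  have "measure (laplace b) S \<le> measure (laplace b) {..-t}"
    using S by (intro finite_measure.finite_measure_mono[OF prob_space.axioms(1)[OF prob_space_laplace[OF b]]]) auto
  also have "\<dots> = exp (- t / b) / 2" using laplace_lower[OF b t] by (simp add: measure_def)
  finally show ?thesis .
qed

lemma graph_facts:
  assumes G: "simple_graph V E" and e: "\<exists>u v. E u v"
  shows "max_deg V E \<ge> 1" "\<And>\<tau>. Q_del_deg V E \<tau> \<le> 0" "Q_del_deg V E (max_deg V E) = 0"
proof -
  have fin: "finite V" using G by (simp add: simple_graph_def)
  have le: "gdeg V E v \<le> max_deg V E" if "v \<in> V" for v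
    unfolding max_deg_def using fin that by (intro Max_ge) auto
  obtain u v where uv: "E u v" using e by blast
  then have uV: "u \<in> V" and vV: "v \<in> V" using G by (auto simp: simple_graph_def)
  have "1 \<le> gdeg V E u"
  proof -
    have "{w \<in> V. E u w} \<noteq> {}" "finite {w \<in> V. E u w}" using fin uv vV by auto
    then have "card {w \<in> V. E u w} > 0" by (simp add: card_gt_0_iff)
    then show ?thesis unfolding gdeg_def by linarith
  qed
  then show "max_deg V E \<ge> 1" using le[OF uV] by linarith
  show "Q_del_deg V E \<tau> \<le> 0" for \<tau>
    unfolding Q_del_deg_def by (auto intro!: sum_nonneg)
  have "{v \<in> V. gdeg V E v \<ge> max_deg V E} = {v \<in> V. gdeg V E v = max_deg V E}"
    using le by force
  then show "Q_del_deg V E (max_deg V E) = 0"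
    unfolding Q_del_deg_def by simp
qed

theorem mainTheorem3:
  fixes V :: "'a set" and E :: "'a \<Rightarrow> 'a \<Rightarrow> bool" and \<epsilon> \<beta> :: real
  assumes "simple_graph V E"
    and "\<exists>u v. E u v"
    and "\<epsilon> > 0" and "0 < \<beta>" and "\<beta> < 1"
  shows "measure (noise_space (2 / \<epsilon>))
     {\<omega> \<in> space (noise_space (2 / \<epsilon>)).
        \<exists>\<tau>. sv_output (Q_del_deg V E) (- (4 / \<epsilon>) * ln (2 / \<beta>)) \<omega> = Some \<tau>
          \<and> \<tau> \<le> max_deg V E
          \<and> \<bar>Q_del_deg V E \<tau>\<bar> \<le> (4 / \<epsilon>) * ln (real (max_deg V E)) + (8 / \<epsilon>) * ln (2 / \<beta>)}
     \<ge> 1 - \<beta>"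
proof -
  note eps = \<open>\<epsilon> > 0\<close> and bet = \<open>0 < \<beta>\<close> \<open>\<beta> < 1\<close>
  define b where "b = 2 / \<epsilon>"
  have b: "b > 0" using eps by (simp add: b_def)
  define D where "D = max_deg V E"
  define q where "q = Q_del_deg V E"
  define c where "c = b * ln (2 / \<beta>)"
  define c' where "c' = b * ln (2 * real D / \<beta>)"
  define T where "T = - (4 / \<epsilon>) * ln (2 / \<beta>)"
  define R where "R = (4 / \<epsilon>) * ln (real D) + (8 / \<epsilon>) * ln (2 / \<beta>)"
  have D1: "D \<ge> 1" and q0: "\<And>\<tau>. q \<tau> \<le> 0" and qD: "q D = 0"
    using graph_facts[OF assms(1,2)] by (auto simp: D_def q_def)
  have T: "T = - 2 * c" by (simp add: T_def c_def b_def)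
  have R: "R = 2 * b * ln (real D) + 4 * c" by (simp add: R_def c_def b_def)
  have c0: "c \<ge> 0" using b bet by (simp add: c_def)
  have c'0: "c' \<ge> 0" using b bet D1 by (simp add: c'_def)
  have c'eq: "c' = b * ln (real D) + c" using bet D1 b
    by (simp add: c'_def c_def ln_mult ln_div algebra_simps)
  have lnD: "ln (real D) \<ge> 0" using D1 by simp
  let ?P = "noise_space b"
  interpret P: prob_space ?P by (rule prob_space_noise[OF b])
  define Good where "Good = {\<omega> \<in> space ?P. \<exists>\<tau>. sv_output q T \<omega> = Some \<tau> \<and> \<tau> \<le> D \<and> \<bar>q \<tau>\<bar> \<le> R}"
  define G0 where "G0 = {\<omega> \<in> space ?P. -c \<le> \<omega> 0 \<and> \<omega> 0 \<le> c \<and> -c < \<omega> D \<and> (\<forall>\<tau>\<in>{1..D}. \<omega> \<tau> \<le> c')}"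
  have Good_sets: "Good \<in> sets ?P"
    unfolding Good_def sv_output_Some by measurable
  have G0_sets: "G0 \<in> sets ?P"
    unfolding G0_def by measurable
  have sub: "G0 \<subseteq> Good"
  proof
    fix \<omega> assume "\<omega> \<in> G0"
    then have sp: "\<omega> \<in> space ?P" and w0: "-c \<le> \<omega> 0" "\<omega> 0 \<le> c" and wD: "-c < \<omega> D"
      and wt: "\<And>\<tau>. 1 \<le> \<tau> \<Longrightarrow> \<tau> \<le> D \<Longrightarrow> \<omega> \<tau> \<le> c'"
      by (auto simp: G0_def)
    let ?Q = "\<lambda>\<tau>. \<tau> \<ge> 1 \<and> q \<tau> + \<omega> \<tau> > T + \<omega> 0"
    have QD: "?Q D" using D1 qD wD w0 T by simp
    define \<tau> where "\<tau> = (LEAST \<tau>. ?Q \<tau>)"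
    have Qt: "?Q \<tau>" unfolding \<tau>_def by (rule LeastI[where P="?Q", OF QD])
    have tD: "\<tau> \<le> D" unfolding \<tau>_def by (rule Least_le[where P="?Q", OF QD])
    have out: "sv_output q T \<omega> = Some \<tau>"
      using QD by (auto simp: sv_output_def \<tau>_def)
    have "\<omega> \<tau> \<le> c'" using wt Qt tD by auto
    moreover have bl: "b * ln (real D) \<ge> 0" using b lnD by simp
    ultimately have "- q \<tau> \<le> R" using Qt w0 T R c'eq by linarith
    then have "\<bar>q \<tau>\<bar> \<le> R" using q0[of \<tau>] by simp
    then show "\<omega> \<in> Good" using sp out tD by (auto simp: Good_def)
  qed
  define B1 where "B1 = {\<omega> \<in> space ?P. \<omega> 0 \<in> {..<-c}}"
  define B2 where "B2 = {\<omega> \<in> space ?P. \<omega> 0 \<in> {c<..}}"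
  define B3 where "B3 = {\<omega> \<in> space ?P. \<omega> D \<in> {..-c}}"
  define B4 where "B4 = (\<lambda>\<tau>. {\<omega> \<in> space ?P. \<omega> \<tau> \<in> {c'<..}})"
  have B_sets: "B1 \<in> sets ?P" "B2 \<in> sets ?P" "B3 \<in> sets ?P" "\<And>\<tau>. B4 \<tau> \<in> sets ?P"
    unfolding B1_def B2_def B3_def B4_def by measurable
  have ex: "exp (- c / b) / 2 = \<beta> / 4"
    using b bet by (simp add: c_def exp_minus field_simps)
  have ex': "exp (- c' / b) / 2 = \<beta> / (4 * real D)"
    using b bet D1 by (simp add: c'_def exp_minus field_simps)
  have m1: "measure ?P B1 \<le> \<beta> / 4"
  proof -
    have "measure (laplace b) {..<-c} \<le> exp (- c / b) / 2"
      by (rule laplace_lower_meas) (use b c0 in auto)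
    then show ?thesis unfolding B1_def using b ex by (subst coord_measure) auto
  qed
  have m2: "measure ?P B2 \<le> \<beta> / 4"
  proof -
    have "measure (laplace b) {c<..} \<le> exp (- c / b) / 2"
      by (rule laplace_upper_meas) (use b c0 in auto)
    then show ?thesis unfolding B2_def using b ex by (subst coord_measure) auto
  qed
  have m3: "measure ?P B3 \<le> \<beta> / 4"
  proof -
    have "measure (laplace b) {..-c} \<le> exp (- c / b) / 2"
      by (rule laplace_lower_meas) (use b c0 in auto)
    then show ?thesis unfolding B3_def using b ex by (subst coord_measure) auto
  qed
  have m4: "measure ?P (B4 \<tau>) \<le> \<beta> / (4 * real D)" for \<tau>
  proof -
    have "measure (laplace b) {c'<..} \<le> exp (- c' / b) / 2"
      by (rule laplace_upper_meas) (use b c'0 in auto)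
    then show ?thesis unfolding B4_def using b ex' by (subst coord_measure) auto
  qed
  have cov: "space ?P - G0 \<subseteq> B1 \<union> B2 \<union> B3 \<union> (\<Union>\<tau>\<in>{1..D}. B4 \<tau>)"
    by (auto simp: G0_def B1_def B2_def B3_def B4_def not_le)
  have "measure ?P (space ?P - G0) \<le> measure ?P (B1 \<union> B2 \<union> B3 \<union> (\<Union>\<tau>\<in>{1..D}. B4 \<tau>))"
    using cov B_sets by (intro P.finite_measure_mono) auto
  also have "\<dots> \<le> measure ?P B1 + measure ?P B2 + measure ?P B3 + measure ?P (\<Union>\<tau>\<in>{1..D}. B4 \<tau>)"
  proof -
    have "measure ?P (B1 \<union> B2 \<union> B3 \<union> (\<Union>\<tau>\<in>{1..D}. B4 \<tau>)) \<le> measure ?P (B1 \<union> B2 \<union> B3) + measure ?P (\<Union>\<tau>\<in>{1..D}. B4 \<tau>)"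
      using B_sets by (intro measure_Un_le) auto
    moreover have "measure ?P (B1 \<union> B2 \<union> B3) \<le> measure ?P (B1 \<union> B2) + measure ?P B3"
      using B_sets by (intro measure_Un_le) auto
    moreover have "measure ?P (B1 \<union> B2) \<le> measure ?P B1 + measure ?P B2"
      using B_sets by (intro measure_Un_le) auto
    ultimately show ?thesis by linarith
  qed
  also have "measure ?P (\<Union>\<tau>\<in>{1..D}. B4 \<tau>) \<le> (\<Sum>\<tau>\<in>{1..D}. measure ?P (B4 \<tau>))"
    using B_sets by (intro measure_UNION_le) auto
  also have "\<dots> \<le> (\<Sum>\<tau>\<in>{1..D}. \<beta> / (4 * real D))"
    by (intro sum_mono m4)
  also have "\<dots> = \<beta> / 4" using D1 by simp
  finally have "measure ?P (space ?P - G0) \<le> \<beta>"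
    using m1 m2 m3 by linarith
  then have "measure ?P G0 \<ge> 1 - \<beta>"
    using P.prob_compl[OF G0_sets] by linarith
  also have "measure ?P G0 \<le> measure ?P Good"
    using sub Good_sets by (intro P.finite_measure_mono)
  finally show ?thesis
    by (simp add: Good_def b_def D_def q_def T_def R_def)
qed

end
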